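(* Let $\mathcal{T}=(V,A,E,f,q)$ be a decorated tree, let $v,v'\in V\cup A_0$ be distinct, and suppose the path $\gamma=\gamma_{v,v'}=(x_0,\dots,x_n)$ (so $x_0=v$, $x_n=v'$, $n>0$) is linear. Let $e_1=\{x_0,x_1\}$ and $e_n=\{x_{n-1},x_n\}$. Then $$q(e_1,v)\,N_{v'}-Q(e_n,v')\,N_v=\det(\gamma)\,p(v,e_1),$$ where $\det(\gamma)=q(e_1,x_0)q(e_n,x_n)-Q(e_1,x_0)Q(e_n,x_n)$.
   Context: A graph is a pair $(X_0,X_1)$ of finite sets such that each element of $X_1$ (an edge) is a $2$-element subset of $X_0$; elements of $X_0$ are cells. The valency $\delta_x$ of a cell is the number of edges containing it. A path is a tuple $(x_0,\dots,x_n)$ ($n\ge0$) of cells with $\{x_i,x_{i+1}\}$ an edge for each $i<n$, these edges pairwise distinct; a cell/edge is in the path if it is some $x_i$ / some $\{x_i,x_{i+1}\}$. The graph is a tree if any two cells $x,y$ are joined by a unique path $\gamma_{x,y}$. A decorated tree is $(V,A,E,f,q)$ with $V$ (vertices), $A$ (arrows) finite disjoint sets, $(V\cup A,E)$ a tree, every arrow of valency $1$, $f:A\to\mathbb{Z}$, $q(e,x)\in\mathbb{Z}$ for each $e\in E$, $x\in e$, with $q(e,\alpha)=1$ for $\alpha\in A$, and for each $v\in V$ and distinct edges $e,e'\ni v$, $\gcd(q(e,v),q(e',v))=1$. $A_0=\{\alpha\in A:f(\alpha)=0\}$. For $x\in V\cup A$, $e\ni x$: $Q(e,x)=\prod q(e',x)$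 over edges $e'\ne e$ containing $x$ (empty product $=1$). An edge $\varepsilon$ is incident to a path $\gamma$ if it is not in $\gamma$ but contains a cell $u$ of $\gamma$; $q(\varepsilon,\gamma):=q(\varepsilon,u)$. For $v\ne\alpha$, $v\in V\cup A$, $\alpha\in A$: $x_{v,\alpha}=f(\alpha)\prod_\varepsilon q(\varepsilon,\gamma_{v,\alpha})$ over edges incident to $\gamma_{v,\alpha}$; $\hat x_{v,\alpha}$ the same with product restricted to $\varepsilon\not\ni v$. For $v\in V\cup A_0$, $N_v=\sum_{\alpha\in A\setminus A_0}x_{v,\alpha}$. For $u\in V\cup A$, $e\ni u$: $p(u,e)=\sum\hat x_{u,\alpha}$ over $\alpha\in A\setminus A_0$ with $e$ in $\gamma_{u,\alpha}$. A path $(x_0,\dots,x_n)$ with $n>0$ is linear if $\delta_{x_i}=2$ for all $0<i<n$. *)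

theory Defs
  imports Main
begin

definition is_graph :: "'a set \<Rightarrow> 'a set set \<Rightarrow> bool" where
  "is_graph X E \<longleftrightarrow> finite X \<and> finite E \<and> (\<forall>e\<in>E. e \<subseteq> X \<and> card e = 2)"

definition valency :: "'a set set \<Rightarrow> 'a \<Rightarrow> nat" where
  "valency E x = card {e \<in> E. x \<in> e}"

definition path_edge_list :: "'a list \<Rightarrow> 'a set list" where
  "path_edge_list p = map (\<lambda>i. {p ! i, p ! Suc i}) [0..<length p - 1]"

definition path_edges :: "'a list \<Rightarrow> 'a set set" where
  "path_edges p = set (path_edge_list p)"

definition is_path :: "'a set \<Rightarrow> 'a set set \<Rightarrow> 'a list \<Rightarrow> bool" where
  "is_path X E p \<longleftrightarrow> p \<noteq> [] \<and> set p \<subseteq> X \<and> set (path_edge_list p) \<subseteq> E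
      \<and> distinct (path_edge_list p)"

definition is_tree :: "'a set \<Rightarrow> 'a set set \<Rightarrow> bool" where
  "is_tree X E \<longleftrightarrow> is_graph X E \<and>
     (\<forall>x\<in>X. \<forall>y\<in>X. \<exists>!p. is_path X E p \<and> hd p = x \<and> last p = y)"

definition gam :: "'a set \<Rightarrow> 'a set set \<Rightarrow> 'a \<Rightarrow> 'a \<Rightarrow> 'a list" where
  "gam X E x y = (THE p. is_path X E p \<and> hd p = x \<and> last p = y)"

definition decorated_tree ::
  "'a set \<Rightarrow> 'a set \<Rightarrow> 'a set set \<Rightarrow> ('a \<Rightarrow> int) \<Rightarrow> ('a set \<Rightarrow> 'a \<Rightarrow> int) \<Rightarrow> bool" where
  "decorated_tree V A E f q \<longleftrightarrow>
     finite V \<and> finite A \<and> V \<inter> A = {} \<and> is_tree (V \<union> A) E \<and>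
     (\<forall>\<alpha>\<in>A. valency E \<alpha> = 1) \<and>
     (\<forall>e\<in>E. \<forall>\<alpha>\<in>A. \<alpha> \<in> e \<longrightarrow> q e \<alpha> = 1) \<and>
     (\<forall>v\<in>V. \<forall>e\<in>E. \<forall>e'\<in>E. v \<in> e \<and> v \<in> e' \<and> e \<noteq> e' \<longrightarrow> gcd (q e v) (q e' v) = 1)"

definition A0 :: "'a set \<Rightarrow> ('a \<Rightarrow> int) \<Rightarrow> 'a set" where
  "A0 A f = {\<alpha> \<in> A. f \<alpha> = 0}"

definition QQ :: "'a set set \<Rightarrow> ('a set \<Rightarrow> 'a \<Rightarrow> int) \<Rightarrow> 'a set \<Rightarrow> 'a \<Rightarrow> int" where
  "QQ E q e x = (\<Prod>e'\<in>{e' \<in> E. x \<in> e' \<and> e' \<noteq> e}. q e' x)"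

definition incident_edges :: "'a set set \<Rightarrow> 'a list \<Rightarrow> 'a set set" where
  "incident_edges E p = {\<epsilon> \<in> E. \<epsilon> \<notin> path_edges p \<and> \<epsilon> \<inter> set p \<noteq> {}}"

definition q_path :: "('a set \<Rightarrow> 'a \<Rightarrow> int) \<Rightarrow> 'a set \<Rightarrow> 'a list \<Rightarrow> int" where
  "q_path q \<epsilon> p = q \<epsilon> (THE u. u \<in> \<epsilon> \<and> u \<in> set p)"

definition xx :: "'a set \<Rightarrow> 'a set \<Rightarrow> 'a set set \<Rightarrow> ('a \<Rightarrow> int) \<Rightarrow> ('a set \<Rightarrow> 'a \<Rightarrow> int)
    \<Rightarrow> 'a \<Rightarrow> 'a \<Rightarrow> int" where
  "xx V A E f q v \<alpha> = (let g = gam (V \<union> A) E v \<alpha> in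
      f \<alpha> * (\<Prod>\<epsilon>\<in>incident_edges E g. q_path q \<epsilon> g))"

definition xx_hat :: "'a set \<Rightarrow> 'a set \<Rightarrow> 'a set set \<Rightarrow> ('a \<Rightarrow> int) \<Rightarrow> ('a set \<Rightarrow> 'a \<Rightarrow> int)
    \<Rightarrow> 'a \<Rightarrow> 'a \<Rightarrow> int" where
  "xx_hat V A E f q v \<alpha> = (let g = gam (V \<union> A) E v \<alpha> in
      f \<alpha> * (\<Prod>\<epsilon>\<in>{\<epsilon> \<in> incident_edges E g. v \<notin> \<epsilon>}. q_path q \<epsilon> g))"

definition NN :: "'a set \<Rightarrow> 'a set \<Rightarrow> 'a set set \<Rightarrow> ('a \<Rightarrow> int) \<Rightarrow> ('a set \<Rightarrow> 'a \<Rightarrow> int)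
    \<Rightarrow> 'a \<Rightarrow> int" where
  "NN V A E f q v = (\<Sum>\<alpha>\<in>A - A0 A f. xx V A E f q v \<alpha>)"

definition pp :: "'a set \<Rightarrow> 'a set \<Rightarrow> 'a set set \<Rightarrow> ('a \<Rightarrow> int) \<Rightarrow> ('a set \<Rightarrow> 'a \<Rightarrow> int)
    \<Rightarrow> 'a \<Rightarrow> 'a set \<Rightarrow> int" where
  "pp V A E f q u e = (\<Sum>\<alpha>\<in>{\<alpha> \<in> A - A0 A f. e \<in> path_edges (gam (V \<union> A) E u \<alpha>)}.
      xx_hat V A E f q u \<alpha>)"

definition linear_path :: "'a set set \<Rightarrow> 'a list \<Rightarrow> bool" where
  "linear_path E p \<longleftrightarrow> length p > 1 \<and> (\<forall>i. 0 < i \<and> i < length p - 1 \<longrightarrow> valency E (p ! i) = 2)"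

definition det_path :: "'a set set \<Rightarrow> ('a set \<Rightarrow> 'a \<Rightarrow> int) \<Rightarrow> 'a list \<Rightarrow> int" where
  "det_path E q p = (let n = length p - 1; e1 = {p ! 0, p ! 1}; en = {p ! (n - 1), p ! n} in
      q e1 (p ! 0) * q en (p ! n) - QQ E q e1 (p ! 0) * QQ E q en (p ! n))"

end

theory Submission
  imports Defs
begin

abbreviation "pel \<equiv> path_edge_list"

lemma pel_Nil[simp]: "pel [] = []" by (simp add: path_edge_list_def)
lemma pel_single[simp]: "pel [x] = []" by (simp add: path_edge_list_def)
lemma pel_Cons2[simp]: "pel (x#y#p) = {x,y} # pel (y#p)"
  unfolding path_edge_list_def by (simp add: upt_conv_Cons map_Suc_upt[symmetric] del: upt_Suc)

lemma pel_append: "pel (p @ x # r) = pel (p @ [x]) @ pel (x # r)"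
proof (induction p)
  case Nil then show ?case by simp
next
  case (Cons a p) then show ?case by (cases p) auto
qed

lemma pel_rev: "pel (rev p) = rev (pel p)"
proof (induction p)
  case Nil then show ?case by simp
next
  case (Cons a p) then show ?case
  proof (cases p)
    case Nil then show ?thesis by simp
  next
    case (Cons b p')
    have "pel (rev (a#p)) = pel (rev p' @ b # [a])" using Cons by simp
    also have "\<dots> = pel (rev p' @ [b]) @ [{b,a}]" by (subst pel_append) simp
    also have "\<dots> = rev (pel p) @ [{a,b}]" using Cons.IH \<open>p = b # p'\<close> by (simp add: insert_commute)
    finally show ?thesis using \<open>p = b # p'\<close> by simp
  qed
qed

lemma pel_join: "p \<noteq> [] \<Longrightarrow> q \<noteq> [] \<Longrightarrow> last p = hd q \<Longrightarrow> pel (butlast p @ q) = pel p @ pel q"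
proof -
  assume a: "p \<noteq> []" "q \<noteq> []" "last p = hd q"
  have "butlast p @ q = butlast p @ last p # tl q" using a by simp
  then have "pel (butlast p @ q) = pel (butlast p @ [last p]) @ pel (last p # tl q)"
    using pel_append[of "butlast p" "last p" "tl q"] by simp
  moreover have "butlast p @ [last p] = p" using a(1) by simp
  moreover have "last p # tl q = q" using a(2,3) by simp
  ultimately show ?thesis by metis
qed

lemma set_join: "p \<noteq> [] \<Longrightarrow> q \<noteq> [] \<Longrightarrow> last p = hd q \<Longrightarrow> set (butlast p @ q) = set p \<union> set q"
proof -
  assume a: "p \<noteq> []" "q \<noteq> []" "last p = hd q"
  have "butlast p @ q = butlast p @ last p # tl q" using a by simp
  moreover have "set p = set (butlast p) \<union> {last p}" using a
    by (induction p rule: rev_induct) auto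
  moreover have "set q = insert (hd q) (set (tl q))" using a by (cases q) auto
  ultimately show ?thesis using a by auto
qed

lemma pel_subset: "e \<in> set (pel p) \<Longrightarrow> e \<subseteq> set p"
  unfolding path_edge_list_def by auto

lemma pel_elem: "e \<in> set (pel p) \<Longrightarrow> \<exists>i. Suc i < length p \<and> e = {p!i, p!Suc i}"
  unfolding path_edge_list_def apply clarsimp
  subgoal for i by (rule exI[of _ i]) simp
  done

lemma pel_tl: "e \<in> set (pel p) \<Longrightarrow> e \<inter> set (tl p) \<noteq> {}"
proof -
  assume "e \<in> set (pel p)"
  then obtain i where i: "Suc i < length p" "e = {p!i, p!Suc i}" using pel_elem by blast
  then have "p ! Suc i = tl p ! i" by (cases p) auto
  moreover have "i < length (tl p)" using i by simp
  ultimately show ?thesis using i nth_mem[of i "tl p"] by auto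
qed

lemma pel_hd: "p \<noteq> [] \<Longrightarrow> length p \<ge> 2 \<Longrightarrow> hd (pel p) = {p!0, p!1}"
  unfolding path_edge_list_def by (simp add: hd_map)

lemma pel_last: "length p \<ge> 2 \<Longrightarrow> last (pel p) = {p!(length p - 2), p!(length p - 1)}"
proof -
  assume "length p \<ge> 2"
  then have "[0..<length p - 1] \<noteq> []" "last [0..<length p - 1] = length p - 2" "Suc (length p - 2) = length p - 1"
    by auto
  then show ?thesis unfolding path_edge_list_def by (simp add: last_map)
qed

lemma pel_ne: "length p \<ge> 2 \<Longrightarrow> pel p \<noteq> []"
  unfolding path_edge_list_def by simp

lemma is_path_append: "is_path X E (p @ x # r) \<longleftrightarrow>
   is_path X E (p @ [x]) \<and> is_path X E (x # r) \<and> set (pel (p @ [x])) \<inter> set (pel (x # r)) = {}"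
  unfolding is_path_def pel_append[of p x r] distinct_append set_append by (intro iffI conjI; elim conjE; simp)

lemma is_path_rev: "is_path X E p \<Longrightarrow> is_path X E (rev p)"
  unfolding is_path_def by (simp add: pel_rev)

lemma is_path_tl: "is_path X E (x # y # p) \<Longrightarrow> is_path X E (y # p)"
  using is_path_append[of X E "[x]" y p] by simp

lemma tree_graph: "is_tree X E \<Longrightarrow> is_graph X E"
  unfolding is_tree_def by simp

lemma tree_finE: "is_tree X E \<Longrightarrow> finite E"
  unfolding is_tree_def is_graph_def by simp

lemma graph_edge: "is_graph X E \<Longrightarrow> e \<in> E \<Longrightarrow> \<exists>a b. a \<noteq> b \<and> e = {a,b}"
  unfolding is_graph_def by (metis card_2_iff)

lemma edge_eq: "is_graph X E \<Longrightarrow> e \<in> E \<Longrightarrow> a \<in> e \<Longrightarrow> b \<in> e \<Longrightarrow> a \<noteq> b \<Longrightarrow> e = {a,b}"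
  using graph_edge by fastforce

lemma path_X: "is_path X E p \<Longrightarrow> set p \<subseteq> X" unfolding is_path_def by simp
lemma path_E: "is_path X E p \<Longrightarrow> set (pel p) \<subseteq> E" unfolding is_path_def by simp
lemma path_ne: "is_path X E p \<Longrightarrow> p \<noteq> []" unfolding is_path_def by simp
lemma path_dpel: "is_path X E p \<Longrightarrow> distinct (pel p)" unfolding is_path_def by simp

lemma path_unique:
  assumes T: "is_tree X E" and P: "is_path X E p" "is_path X E p'"
    and h: "hd p = hd p'" "last p = last p'"
  shows "p = p'"
proof -
  have "hd p \<in> X" "last p \<in> X" using P(1) path_X path_ne by (metis hd_in_set last_in_set subsetD)+
  then have "\<exists>!r. is_path X E r \<and> hd r = hd p \<and> last r = last p" using T unfolding is_tree_def by blast
  then show ?thesis using P h by metis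
qed

lemma gam_path:
  assumes T: "is_tree X E" and "x \<in> X" "y \<in> X"
  shows "is_path X E (gam X E x y) \<and> hd (gam X E x y) = x \<and> last (gam X E x y) = y"
proof -
  have "\<exists>!r. is_path X E r \<and> hd r = x \<and> last r = y" using T assms unfolding is_tree_def by blast
  then show ?thesis unfolding gam_def by (rule theI')
qed

lemma gam_eq:
  assumes T: "is_tree X E" and P: "is_path X E p" and "hd p = x" "last p = y"
  shows "gam X E x y = p"
proof -
  have "x \<in> X" "y \<in> X" using P assms path_X path_ne by (metis hd_in_set last_in_set subsetD)+
  then show ?thesis using gam_path[OF T] path_unique[OF T] P assms by metis
qed

lemma path_distinct:
  assumes T: "is_tree X E" and P: "is_path X E p"
  shows "distinct p"
proof (rule ccontr)
  assume "\<not> distinct p"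
  then obtain xs y ys zs where p: "p = xs @ [y] @ ys @ [y] @ zs" using not_distinct_decomp by blast
  have 1: "is_path X E (xs @ [y])" and 2: "is_path X E (y # ys @ y # zs)"
    and d1: "set (pel (xs@[y])) \<inter> set (pel (y # ys @ y # zs)) = {}"
    using P[unfolded p] is_path_append[of X E xs y "ys @ y # zs"] by auto
  have 3: "is_path X E (y # zs)" using 2 is_path_append[of X E "y#ys" y zs] by auto
  have 4: "set (pel (y#zs)) \<subseteq> set (pel (y # ys @ y # zs))"
    using pel_append[of "y#ys" y zs] by auto
  have "is_path X E (xs @ y # zs)" using 1 3 4 d1 is_path_append[of X E xs y zs] by auto
  moreover have "hd (xs @ y # zs) = hd p" unfolding p by (cases xs) auto
  moreover have "last (xs @ y # zs) = last p" unfolding p by (cases zs) auto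
  ultimately have "xs @ y # zs = p" using path_unique[OF T] P by metis
  then show False unfolding p by simp
qed

lemma shortcut:
  assumes T: "is_tree X E" and P: "is_path X E p" and p: "p = xs @ a # m @ b # zs"
    and ab: "{a,b} \<in> E" "{a,b} \<notin> set (pel p)"
  shows False
proof -
  have 1: "is_path X E (xs @ [a])" and 2: "is_path X E (a # m @ b # zs)"
    and d1: "set (pel (xs@[a])) \<inter> set (pel (a # m @ b # zs)) = {}"
    using P[unfolded p] is_path_append[of X E xs a "m @ b # zs"] by auto
  have pp: "pel p = pel (xs@[a]) @ pel (a # m @ b # zs)" unfolding p by (rule pel_append)
  have 3: "is_path X E (b # zs)" using 2 is_path_append[of X E "a#m" b zs] by auto
  have 4: "set (pel (b#zs)) \<subseteq> set (pel (a # m @ b # zs))"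
    using pel_append[of "a#m" b zs] by auto
  have aX: "a \<in> X" "b \<in> X" using path_X[OF P] p by auto
  have 5: "is_path X E [a,b]" using aX ab unfolding is_path_def by simp
  have 6: "{a,b} \<notin> set (pel (b#zs))" using 4 ab pp by auto
  have 7: "is_path X E (a # b # zs)" using is_path_append[of X E "[a]" b zs] 3 5 6 by simp
  have 8: "set (pel (xs@[a])) \<inter> set (pel (a # b # zs)) = {}" using d1 4 ab(2) pp by auto
  have "is_path X E (xs @ a # b # zs)" using 1 7 8 is_path_append[of X E xs a "b # zs"] by simp
  moreover have "hd (xs @ a # b # zs) = hd p" unfolding p by (cases xs) auto
  moreover have "last (xs @ a # b # zs) = last p" unfolding p by (cases zs) auto
  ultimately have "xs @ a # b # zs = p" using path_unique[OF T] P by metis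
  then have "m = []" unfolding p by simp
  then show False using ab(2) pp by simp
qed

lemma chord:
  assumes T: "is_tree X E" and P: "is_path X E p" and e: "e \<in> E" "a \<in> e" "b \<in> e" "a \<noteq> b"
    and ab: "a \<in> set p" "b \<in> set p"
  shows "e \<in> set (pel p)"
proof (rule ccontr)
  assume ne: "e \<notin> set (pel p)"
  have eq: "e = {a,b}" using edge_eq[OF tree_graph[OF T]] e by blast
  obtain xs ys where p: "p = xs @ a # ys" using ab(1) split_list by metis
  then have "b \<in> set xs \<or> b \<in> set ys" using ab(2) e(4) by auto
  then show False
  proof
    assume "b \<in> set ys"
    then obtain m zs where "ys = m @ b # zs" using split_list by metis
    then show False using shortcut[OF T P, of xs a m b zs] p e eq ne by auto
  next
    assume "b \<in> set xs"
    then obtain xs1 m where "xs = xs1 @ b # m" using split_list by metis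
    then show False using shortcut[OF T P, of xs1 b m a ys] p e eq ne by (auto simp: insert_commute)
  qed
qed

lemma hd_edge:
  assumes D: "distinct p" and L: "length p \<ge> 2" and e: "e \<in> set (pel p)" "hd p \<in> e"
  shows "e = hd (pel p)"
proof -
  obtain x y p' where p: "p = x # y # p'" using L by (cases p; cases "tl p") auto
  show ?thesis
  proof (rule ccontr)
    assume "e \<noteq> hd (pel p)"
    then have "e \<in> set (pel (y#p'))" using e p by auto
    then have "x \<in> set (y#p')" using pel_subset e p by fastforce
    then show False using D p by simp
  qed
qed

lemma last_edge:
  assumes D: "distinct p" and L: "length p \<ge> 2" and e: "e \<in> set (pel p)" "last p \<in> e"
  shows "e = last (pel p)"
proof -
  have "e = hd (pel (rev p))"
    using hd_edge[of "rev p" e] D L e by (simp add: pel_rev hd_rev)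
  then show ?thesis using pel_ne[OF L] by (simp add: pel_rev hd_rev)
qed

lemma three_edges:
  assumes "finite E" "valency E z = 2" "e1 \<in> E" "e2 \<in> E" "e3 \<in> E" "z \<in> e1" "z \<in> e2" "z \<in> e3"
    "e1 \<noteq> e2" "e1 \<noteq> e3" "e2 \<noteq> e3"
  shows False
proof -
  have "{e1,e2,e3} \<subseteq> {e\<in>E. z \<in> e}" using assms by auto
  then have "card {e1,e2,e3} \<le> card {e\<in>E. z \<in> e}" using assms(1) by (intro card_mono) auto
  then show False using assms unfolding valency_def by auto
qed

lemma interior_edge:
  assumes F: "finite E" and P: "is_path X E p" and D: "distinct p"
    and z: "z \<in> set p" "z \<noteq> hd p" "z \<noteq> last p" "valency E z = 2"
    and e: "e \<in> E" "z \<in> e"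
  shows "e \<in> set (pel p)"
proof (rule ccontr)
  assume ne: "e \<notin> set (pel p)"
  obtain p1 p3 where p: "p = p1 @ z # p3" using z(1) split_list by metis
  have "p1 \<noteq> []" using z(2) p by auto
  then obtain p1' w1 where p1: "p1 = p1' @ [w1]" by (metis rev_exhaust)
  have "p3 \<noteq> []" using z(3) p by auto
  then obtain w2 p3' where p3: "p3 = w2 # p3'" by (metis list.exhaust)
  have pp: "pel p = pel (p1' @ [w1]) @ {w1,z} # {z,w2} # pel (w2 # p3')"
    unfolding p p1 p3 using pel_append[of p1' w1 "z # w2 # p3'"] by simp
  have dd: "w1 \<noteq> w2" "w1 \<noteq> z" "w2 \<noteq> z" using D unfolding p p1 p3 by auto
  have "{w1,z} \<in> E" "{z,w2} \<in> E" using path_E[OF P] pp by auto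
  moreover have "{w1,z} \<noteq> {z,w2}" using dd by (metis doubleton_eq_iff)
  moreover have "e \<noteq> {w1,z}" "e \<noteq> {z,w2}" using ne pp by auto
  ultimately show False using three_edges[OF F z(4), of "{w1,z}" "{z,w2}" e] e by auto
qed


lemma follow:
  "finite E \<Longrightarrow> is_path X E (x # y # c) \<Longrightarrow> distinct (x # y # c) \<Longrightarrow> is_path X E (x # y # g') \<Longrightarrow>
   (\<forall>z\<in>set (x # y # c). z \<noteq> x \<and> z \<noteq> last (x # y # c) \<longrightarrow> valency E z = 2) \<Longrightarrow>
   last (x # y # g') \<notin> set (x # y # c) \<Longrightarrow> \<exists>r. x # y # g' = (x # y # c) @ r"
proof (induction c arbitrary: x y g')
  case Nil
  then show ?case by auto
next
  case (Cons w c)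
  have "g' \<noteq> []" using Cons.prems(6) by auto
  then obtain z g'' where g': "g' = z # g''" by (metis list.exhaust)
  have vy: "valency E y = 2"
  proof -
    have "y \<noteq> last (x # y # w # c)" using Cons.prems(3)
      by (metis distinct.simps(2) last_ConsR last_in_set list.distinct(1))
    then show ?thesis using Cons.prems(3,5) by auto
  qed
  have zw: "z = w"
  proof (rule ccontr)
    assume zw: "z \<noteq> w"
    have "{x,y} \<in> E" "{y,w} \<in> E" using path_E[OF Cons.prems(2)] by auto
    moreover have "{y,z} \<in> E" using path_E[OF Cons.prems(4)] g' by auto
    moreover have "{x,y} \<noteq> {y,z}" using path_dpel[OF Cons.prems(4)] g' by auto
    moreover have "{x,y} \<noteq> {y,w}" using Cons.prems(3) by (auto simp: doubleton_eq_iff)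
    moreover have "{y,z} \<noteq> {y,w}" using zw by (auto simp: doubleton_eq_iff)
    ultimately show False using three_edges[OF Cons.prems(1) vy, of "{x,y}" "{y,w}" "{y,z}"] by auto
  qed
  have "\<exists>r. y # w # g'' = (y # w # c) @ r"
  proof (rule Cons.IH)
    show "finite E" by fact
    show "is_path X E (y # w # c)" using is_path_tl[OF Cons.prems(2)] .
    show "distinct (y # w # c)" using Cons.prems(3) by simp
    show "is_path X E (y # w # g'')" using is_path_tl[OF Cons.prems(4)] g' zw by simp
    show "\<forall>z\<in>set (y # w # c). z \<noteq> y \<and> z \<noteq> last (y # w # c) \<longrightarrow> valency E z = 2"
      using Cons.prems(3,5) by auto
    show "last (y # w # g'') \<notin> set (y # w # c)" using Cons.prems(6) g' zw by auto
  qed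
  then show ?case using g' zw by auto
qed


lemma diverge:
  assumes T: "is_tree X E" and P: "is_path X E c" and L: "length c \<ge> 2"
    and I: "\<forall>z\<in>set c. z \<noteq> hd c \<and> z \<noteq> last c \<longrightarrow> valency E z = 2"
    and Pg: "is_path X E g" and hg: "hd g = hd c" and Lg: "length g \<ge> 2" and ne: "g!1 \<noteq> c!1"
  shows "set (tl g) \<inter> set c = {}"
proof (rule ccontr)
  assume "set (tl g) \<inter> set c \<noteq> {}"
  then have ex: "\<exists>z\<in>set (tl g). z \<in> set c" by auto
  have D: "distinct c" and Dg: "distinct g" using path_distinct[OF T] P Pg by auto
  have F: "finite E" using tree_finE[OF T] .
  obtain x g1 where g: "g = x # g1" using Lg by (cases g) auto
  have xh: "x = hd c" using hg g by simp
  have xin: "x \<in> set c" using xh L by (cases c) auto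
  obtain ys z zs where g1: "g1 = ys @ z # zs" and zc: "z \<in> set c" and ys: "\<forall>u\<in>set ys. u \<notin> set c"
    using split_list_first_prop[of g1 "\<lambda>z. z \<in> set c"] ex g by auto
  show False
  proof (cases ys rule: rev_exhaust)
    case Nil
    then have gg: "g = x # z # zs" using g g1 by simp
    have "{x,z} \<in> E" using path_E[OF Pg] gg by auto
    moreover have xz: "x \<noteq> z" using Dg gg by auto
    ultimately have "{x,z} \<in> set (pel c)" using chord[OF T P, of "{x,z}" x z] xin zc by auto
    then have "{x,z} = hd (pel c)" using hd_edge[OF D L] xh by auto
    also have "\<dots> = {c!0, c!1}" using pel_hd[of c] L by (cases c) auto
    also have "c!0 = x" using xh L by (cases c) auto
    finally have "z = c!1" using xz by (auto simp: doubleton_eq_iff)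
    then show False using ne gg by simp
  next
    case (snoc ys' u)
    then have gg: "g = (x # ys' @ [u]) @ z # zs" using g g1 by simp
    have uc: "u \<notin> set c" using ys snoc by auto
    have "pel g = pel (x # ys' @ [u]) @ pel (u # z # zs)"
      using pel_append[of "x#ys'" u "z#zs"] gg by simp
    then have uzE: "{u,z} \<in> E" using path_E[OF Pg] by auto
    have zx: "z \<noteq> x" using Dg gg by auto
    show False
    proof (cases "z = last c")
      case True
      have p0: "is_path X E ((x # ys' @ [u]) @ [z])" using Pg gg is_path_append by metis
      have "hd ((x # ys' @ [u]) @ [z]) = hd c" "last ((x # ys' @ [u]) @ [z]) = last c" using xh True by auto
      then have "(x # ys' @ [u]) @ [z] = c" using path_unique[OF T p0 P] by simp
      moreover have "g ! 1 = ((x # ys' @ [u]) @ [z]) ! 1" unfolding gg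
        by (simp add: nth_append)
      ultimately show False using ne by simp
    next
      case False
      then have "valency E z = 2" using I zc zx xh by auto
      then have "{u,z} \<in> set (pel c)"
        using interior_edge[OF F P D zc _ False _ uzE] zx xh by auto
      then show False using pel_subset uc by fastforce
    qed
  qed
qed


lemma split_cases:
  assumes T: "is_tree X E" and P: "is_path X E c" and L: "length c \<ge> 2"
    and I: "\<forall>z\<in>set c. z \<noteq> hd c \<and> z \<noteq> last c \<longrightarrow> valency E z = 2"
    and a: "\<alpha> \<in> X" "\<alpha> \<notin> set c"
  shows "gam X E (hd c) \<alpha> = butlast c @ gam X E (last c) \<alpha> \<or>
         gam X E (last c) \<alpha> = butlast (rev c) @ gam X E (hd c) \<alpha>"
proof -
  have F: "finite E" using tree_finE[OF T] .
  have D: "distinct c" using path_distinct[OF T P] .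
  have cne: "c \<noteq> []" using L by auto
  have hX: "hd c \<in> X" "last c \<in> X" using path_X[OF P] cne by auto
  define g where "g = gam X E (hd c) \<alpha>"
  define h where "h = gam X E (last c) \<alpha>"
  have g: "is_path X E g" "hd g = hd c" "last g = \<alpha>" using gam_path[OF T hX(1) a(1)] g_def by auto
  have h: "is_path X E h" "hd h = last c" "last h = \<alpha>" using gam_path[OF T hX(2) a(1)] h_def by auto
  obtain x y c' where c: "c = x # y # c'" using L by (cases c; cases "tl c") auto
  have "hd g \<noteq> last g" using g a cne by (metis hd_in_set)
  then obtain g1 g' where gg: "g = x # g1 # g'" using g c path_ne[OF g(1)]
    by (cases g; cases "tl g") auto
  show ?thesis
  proof (cases "g1 = y")
    case True
    have "\<exists>r. x # y # g' = (x # y # c') @ r"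
      using follow[OF F, of X x y c' g'] P D g gg c True I a by auto
    then obtain r where r: "g = c @ r" using gg c True by auto
    have rne: "r \<noteq> []" using r g(3) a(2) cne by auto
    have gsplit: "g = butlast c @ last c # r" using r cne by simp
    have "is_path X E (last c # r)" using g(1) gsplit is_path_append by metis
    moreover have "hd (last c # r) = last c" "last (last c # r) = \<alpha>" using rne r g(3) by auto
    ultimately have "h = last c # r" using path_unique[OF T h(1)] h by metis
    then show ?thesis using gsplit g_def h_def by simp
  next
    case False
    have Lg: "length g \<ge> 2" using gg by simp
    have dis: "set (tl g) \<inter> set c = {}"
      using diverge[OF T P L I g(1) g(2) Lg] False gg c by simp
    define W where "W = butlast (rev c) @ g"
    have rne: "rev c \<noteq> []" "g \<noteq> []" using cne gg by auto
    have lr: "last (rev c) = hd g" using g(2) cne by (simp add: last_rev)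
    have pW: "pel W = pel (rev c) @ pel g" using pel_join[OF rne lr] W_def by simp
    have sW: "set W = set c \<union> set g" using set_join[OF rne lr] W_def by simp
    have "set (pel (rev c)) \<inter> set (pel g) = {}"
    proof (rule ccontr)
      assume "set (pel (rev c)) \<inter> set (pel g) \<noteq> {}"
      then obtain e where e: "e \<in> set (pel (rev c))" "e \<in> set (pel g)" by auto
      have "e \<subseteq> set c" using pel_subset[OF e(1)] by simp
      moreover have "e \<inter> set (tl g) \<noteq> {}" using pel_tl[OF e(2)] .
      ultimately show False using dis by auto
    qed
    then have "is_path X E W"
      using is_path_rev[OF P] g(1) pW sW path_X[OF P] rne W_def
      unfolding is_path_def by auto
    moreover have "last W = \<alpha>" using W_def g(3) rne by simp
    moreover have "hd W = last c" unfolding W_def c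
      by (cases c' rule: rev_exhaust) (auto simp: butlast_append)
    ultimately have "h = W" using path_unique[OF T h(1)] h by metis
    then show ?thesis using W_def g_def h_def by simp
  qed
qed


lemma qpath_val:
  assumes T: "is_tree X E" and P: "is_path X E g" and e: "e \<in> incident_edges E g" "u \<in> e" "u \<in> set g"
  shows "q_path q e g = q e u"
proof -
  have "(THE u. u \<in> e \<and> u \<in> set g) = u"
  proof (rule the_equality)
    show "u \<in> e \<and> u \<in> set g" using e by simp
  next
    fix u' assume u': "u' \<in> e \<and> u' \<in> set g"
    show "u' = u"
    proof (rule ccontr)
      assume "u' \<noteq> u"
      then have "e \<in> set (pel g)" using chord[OF T P, of e u' u] e u' unfolding incident_edges_def by auto
      then show False using e unfolding incident_edges_def path_edges_def by auto
    qed
  qed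
  then show ?thesis unfolding q_path_def by simp
qed

lemma case_a:
  assumes T: "is_tree X E" and Pc: "is_path X E c" and L: "length c \<ge> 2"
    and I: "\<forall>z\<in>set c. z \<noteq> hd c \<and> z \<noteq> last c \<longrightarrow> valency E z = 2"
    and Pg: "is_path X E g" and Ph: "is_path X E h" and hh: "hd h = last c" and gdef: "g = butlast c @ h"
  shows "(\<Prod>e\<in>incident_edges E g. q_path q e g) = QQ E q (hd (pel c)) (hd c) *
            (\<Prod>e\<in>incident_edges E h - {last (pel c)}. q_path q e h)"
    and "(\<Prod>e\<in>incident_edges E h. q_path q e h) = q (last (pel c)) (last c) *
            (\<Prod>e\<in>incident_edges E h - {last (pel c)}. q_path q e h)"
    and "(\<Prod>e\<in>{e\<in>incident_edges E g. hd c \<notin> e}. q_path q e g) =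
            (\<Prod>e\<in>incident_edges E h - {last (pel c)}. q_path q e h)"
proof -
  define e1 where "e1 = hd (pel c)"
  define en where "en = last (pel c)"
  have F: "finite E" using tree_finE[OF T] .
  have Dc: "distinct c" using path_distinct[OF T Pc] .
  have Dg: "distinct g" using path_distinct[OF T Pg] .
  have cne: "c \<noteq> []" using L by auto
  have hne: "h \<noteq> []" using path_ne[OF Ph] .
  have pg: "pel g = pel c @ pel h" using pel_join[OF cne hne hh[symmetric]] gdef by simp
  have sg: "set g = set c \<union> set h" using set_join[OF cne hne hh[symmetric]] gdef by simp
  have Dpel: "set (pel c) \<inter> set (pel h) = {}" using path_dpel[OF Pg] pg by simp
  have bh: "set (butlast c) \<inter> set h = {}" using Dg gdef by simp
  have sc: "set c = insert (last c) (set (butlast c))" using cne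
    by (metis append_butlast_last_id list.set(2) set_append Un_insert_right sup_bot.right_neutral list.set(1))
  have lh: "last c \<in> set h" using hh hne by (metis hd_in_set)
  have K1: "\<And>u. u \<in> set c \<Longrightarrow> u \<in> set h \<Longrightarrow> u = last c" using sc bh by auto
  have hb: "hd c \<in> set (butlast c)" using L by (cases c; cases "tl c") auto
  have K2: "hd c \<notin> set h" using hb bh by auto
  have pne: "pel c \<noteq> []" using pel_ne[OF L] .
  have e1c: "e1 \<in> set (pel c)" "en \<in> set (pel c)" using pne e1_def en_def by auto
  have e1h: "hd c \<in> e1" using pel_hd[OF cne L] e1_def L by (cases c) auto
  have enl: "last c \<in> en" using pel_last[OF L] en_def last_conv_nth[OF cne] by simp
  have cE: "set (pel c) \<subseteq> E" using path_E[OF Pc] .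
  have enI: "en \<in> incident_edges E h" using e1c cE Dpel enl lh
    unfolding incident_edges_def path_edges_def by auto
  define S1 where "S1 = {e\<in>E. hd c \<in> e \<and> e \<noteq> e1}"
  define S2 where "S2 = incident_edges E h - {en}"
  have Inc: "incident_edges E g = S1 \<union> S2"
  proof (rule set_eqI, rule iffI)
    fix e assume e: "e \<in> incident_edges E g"
    then have eE: "e \<in> E" and np: "e \<notin> set (pel c)" "e \<notin> set (pel h)" and m: "e \<inter> set g \<noteq> {}"
      using pg unfolding incident_edges_def path_edges_def by auto
    show "e \<in> S1 \<union> S2"
    proof (cases "e \<inter> set h = {}")
      case False
      then have "e \<in> S2" using eE np e1c unfolding S2_def incident_edges_def path_edges_def by auto
      then show ?thesis by simp
    next
      case True
      then obtain u where u: "u \<in> e" "u \<in> set c" "u \<notin> set h" using m sg by auto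
      have "u \<noteq> last c" using u lh by auto
      show ?thesis
      proof (cases "u = hd c")
        case True
        then show ?thesis using eE u np e1c unfolding S1_def by auto
      next
        case False
        then have "valency E u = 2" using I u \<open>u \<noteq> last c\<close> by auto
        then have "e \<in> set (pel c)" using interior_edge[OF F Pc Dc u(2) False \<open>u \<noteq> last c\<close> _ eE u(1)] by simp
        then show ?thesis using np by simp
      qed
    qed
  next
    fix e assume e: "e \<in> S1 \<union> S2"
    then show "e \<in> incident_edges E g"
    proof
      assume e: "e \<in> S1"
      then have eE: "e \<in> E" "hd c \<in> e" "e \<noteq> e1" unfolding S1_def by auto
      have "e \<notin> set (pel c)" using hd_edge[OF Dc L] eE e1_def by auto
      moreover have "e \<notin> set (pel h)" using pel_subset eE K2 by blast
      moreover have "hd c \<in> set g" using sg cne by simp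
      ultimately show ?thesis using eE pg unfolding incident_edges_def path_edges_def by auto
    next
      assume e: "e \<in> S2"
      then have eE: "e \<in> E" "e \<notin> set (pel h)" "e \<inter> set h \<noteq> {}" "e \<noteq> en"
        unfolding S2_def incident_edges_def path_edges_def by auto
      have "e \<notin> set (pel c)"
      proof
        assume ec: "e \<in> set (pel c)"
        then have "e \<subseteq> set c" using pel_subset by auto
        then have "last c \<in> e" using eE(3) K1 by blast
        then have "e = en" using last_edge[OF Dc L ec] en_def by simp
        then show False using eE by simp
      qed
      then show ?thesis using eE pg sg unfolding incident_edges_def path_edges_def by auto
    qed
  qed
  have Disj: "S1 \<inter> S2 = {}"
  proof (rule ccontr)
    assume "S1 \<inter> S2 \<noteq> {}"
    then obtain e where e: "e \<in> S1" "e \<in> S2" by auto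
    then have eE: "e \<in> E" "hd c \<in> e" "e \<noteq> e1" "e \<notin> set (pel h)" "e \<inter> set h \<noteq> {}"
      unfolding S1_def S2_def incident_edges_def path_edges_def by auto
    then obtain u where u: "u \<in> e" "u \<in> set h" by auto
    have "u \<noteq> hd c" using u K2 by auto
    then have "e \<in> set (pel g)" using chord[OF T Pg eE(1) eE(2) u(1)] sg u cne by auto
    then have "e \<in> set (pel c)" using pg eE by auto
    then show False using hd_edge[OF Dc L _ eE(2)] eE e1_def by auto
  qed
  have Filt: "{e\<in>incident_edges E g. hd c \<notin> e} = S2"
  proof -
    have "\<And>e. e \<in> S2 \<Longrightarrow> hd c \<notin> e"
    proof
      fix e assume e: "e \<in> S2" "hd c \<in> e"
      then have "e \<in> incident_edges E g" using Inc by auto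
      then have "e \<noteq> e1" "e \<in> E" using e1c pg unfolding incident_edges_def path_edges_def by auto
      then have "e \<in> S1" using e unfolding S1_def by auto
      then show False using Disj e by auto
    qed
    then show ?thesis using Inc unfolding S1_def by auto
  qed
  have finI: "finite (incident_edges E k)" for k
    using F unfolding incident_edges_def by simp
  have fS1: "finite S1" using F unfolding S1_def by simp
  have fS2: "finite S2" using finI unfolding S2_def by simp
  have v1: "\<And>e. e \<in> S1 \<Longrightarrow> q_path q e g = q e (hd c)"
    using qpath_val[OF T Pg] Inc sg cne unfolding S1_def by auto
  have v2: "q_path q e g = q_path q e h" if e: "e \<in> S2" for e
  proof -
    obtain u where u: "u \<in> e" "u \<in> set h" using e unfolding S2_def incident_edges_def by auto
    have "q_path q e g = q e u" using qpath_val[OF T Pg, of e u q] Inc e u sg by auto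
    moreover have "q_path q e h = q e u" using qpath_val[OF T Ph, of e u q] e u unfolding S2_def by auto
    ultimately show ?thesis by simp
  qed
  have P2: "(\<Prod>e\<in>S2. q_path q e g) = (\<Prod>e\<in>S2. q_path q e h)" using v2 by (rule prod.cong[OF refl])
  have "(\<Prod>e\<in>incident_edges E g. q_path q e g) = (\<Prod>e\<in>S1. q_path q e g) * (\<Prod>e\<in>S2. q_path q e g)"
    unfolding Inc by (rule prod.union_disjoint[OF fS1 fS2 Disj])
  also have "(\<Prod>e\<in>S1. q_path q e g) = QQ E q e1 (hd c)"
    unfolding QQ_def S1_def using v1 unfolding S1_def by (intro prod.cong) auto
  finally show "(\<Prod>e\<in>incident_edges E g. q_path q e g) = QQ E q (hd (pel c)) (hd c) *
            (\<Prod>e\<in>incident_edges E h - {last (pel c)}. q_path q e h)"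
    using P2 e1_def en_def S2_def by simp
  have "(\<Prod>e\<in>incident_edges E h. q_path q e h) = q_path q en h * (\<Prod>e\<in>incident_edges E h - {en}. q_path q e h)"
    using prod.remove[OF finI enI] .
  moreover have "q_path q en h = q en (last c)" using qpath_val[OF T Ph enI enl lh] .
  ultimately show "(\<Prod>e\<in>incident_edges E h. q_path q e h) = q (last (pel c)) (last c) *
            (\<Prod>e\<in>incident_edges E h - {last (pel c)}. q_path q e h)" using en_def by simp
  show "(\<Prod>e\<in>{e\<in>incident_edges E g. hd c \<notin> e}. q_path q e g) =
            (\<Prod>e\<in>incident_edges E h - {last (pel c)}. q_path q e h)"
    using Filt P2 S2_def en_def by simp
qed


lemma xx_eq: "xx V A E f q v \<alpha> = f \<alpha> * (\<Prod>e\<in>incident_edges E (gam (V \<union> A) E v \<alpha>). q_path q e (gam (V \<union> A) E v \<alpha>))"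
  unfolding xx_def Let_def by simp

lemma xx_hat_eq: "xx_hat V A E f q v \<alpha> = f \<alpha> * (\<Prod>e\<in>{e\<in>incident_edges E (gam (V \<union> A) E v \<alpha>). v \<notin> e}. q_path q e (gam (V \<union> A) E v \<alpha>))"
  unfolding xx_hat_def Let_def by simp

theorem proposition1p21:
  fixes V A :: "'a set" and E :: "'a set set" and f :: "'a \<Rightarrow> int"
    and q :: "'a set \<Rightarrow> 'a \<Rightarrow> int" and v v' :: 'a
  assumes "decorated_tree V A E f q"
    and "v \<in> V \<union> A0 A f" and "v' \<in> V \<union> A0 A f" and "v \<noteq> v'"
    and "linear_path E (gam (V \<union> A) E v v')"
  shows "(let \<gamma> = gam (V \<union> A) E v v'; n = length \<gamma> - 1;
             e1 = {\<gamma> ! 0, \<gamma> ! 1}; en = {\<gamma> ! (n - 1), \<gamma> ! n} in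
          q e1 v * NN V A E f q v' - QQ E q en v' * NN V A E f q v
            = det_path E q \<gamma> * pp V A E f q v e1)"
proof -
  define X where "X = V \<union> A"
  have DT: "finite V" "finite A" "V \<inter> A = {}" "is_tree X E" "\<forall>\<alpha>\<in>A. valency E \<alpha> = 1"
    using assms(1) unfolding decorated_tree_def X_def by auto
  have T: "is_tree X E" using DT by simp
  have vX: "v \<in> X" "v' \<in> X" using assms(2,3) unfolding X_def A0_def by auto
  define c where "c = gam X E v v'"
  have Pc: "is_path X E c" "hd c = v" "last c = v'" using gam_path[OF T vX] c_def by auto
  have lin: "linear_path E c" using assms(5) c_def X_def by simp
  have L: "length c \<ge> 2" using lin unfolding linear_path_def by simp
  have cne: "c \<noteq> []" using L by auto
  have I: "\<forall>z\<in>set c. z \<noteq> hd c \<and> z \<noteq> last c \<longrightarrow> valency E z = 2"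
  proof (intro ballI impI)
    fix z assume z: "z \<in> set c" "z \<noteq> hd c \<and> z \<noteq> last c"
    then obtain i where i: "i < length c" "c ! i = z" by (metis in_set_conv_nth)
    have "i \<noteq> 0"
    proof
      assume "i = 0" then show False using i z hd_conv_nth[OF cne] by simp
    qed
    moreover have "i \<noteq> length c - 1" using i z last_conv_nth[OF cne] by auto
    ultimately show "valency E z = 2" using lin i unfolding linear_path_def by auto
  qed
  have Pr: "is_path X E (rev c)" using is_path_rev[OF Pc(1)] .
  have Lr: "length (rev c) \<ge> 2" using L by simp
  have Ir: "\<forall>z\<in>set (rev c). z \<noteq> hd (rev c) \<and> z \<noteq> last (rev c) \<longrightarrow> valency E z = 2"
    using I cne by (simp add: hd_rev last_rev)
  define n where "n = length c - 1"
  define e1 where "e1 = {c ! 0, c ! 1}"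
  define en where "en = {c ! (n - 1), c ! n}"
  have c0: "c ! 0 = v" using Pc hd_conv_nth[OF cne] by simp
  have cn: "c ! n = v'" using Pc last_conv_nth[OF cne] n_def by simp
  have he1: "hd (pel c) = e1" using pel_hd[OF cne L] e1_def by simp
  have len: "last (pel c) = en" using pel_last[OF L] en_def n_def L
    by (metis Suc_1 diff_Suc_eq_diff_pred)
  have pne: "pel c \<noteq> []" using pel_ne[OF L] .
  have hre: "hd (pel (rev c)) = en" using len pne by (simp add: pel_rev hd_rev)
  have lre: "last (pel (rev c)) = e1" using he1 pne by (simp add: pel_rev last_rev)
  have e1c: "e1 \<in> set (pel c)" using he1 pne by auto
  define g where "g = (\<lambda>\<alpha>. gam X E v \<alpha>)"
  define h where "h = (\<lambda>\<alpha>. gam X E v' \<alpha>)"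
  define det where "det = q e1 v * q en v' - QQ E q e1 v * QQ E q en v'"
  define S where "S = A - A0 A f"
  have fS: "finite S" using DT S_def by simp
  have key: "q e1 v * xx V A E f q v' \<alpha> - QQ E q en v' * xx V A E f q v \<alpha> =
     (if e1 \<in> path_edges (g \<alpha>) then det * xx_hat V A E f q v \<alpha> else 0)" if aS: "\<alpha> \<in> S" for \<alpha>
  proof -
    have aX: "\<alpha> \<in> X" using aS S_def X_def by auto
    have aA: "\<alpha> \<in> A" "f \<alpha> \<noteq> 0" using aS unfolding S_def A0_def by auto
    have anc: "\<alpha> \<notin> set c"
    proof
      assume ac: "\<alpha> \<in> set c"
      have "\<alpha> \<noteq> v" "\<alpha> \<noteq> v'" using assms(2,3) aA DT(3) unfolding A0_def by auto
      then have "valency E \<alpha> = 2" using I ac Pc by auto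
      then show False using DT(5) aA by auto
    qed
    have Pg: "is_path X E (g \<alpha>)" "hd (g \<alpha>) = v" "last (g \<alpha>) = \<alpha>" using gam_path[OF T vX(1) aX] g_def by auto
    have Ph: "is_path X E (h \<alpha>)" "hd (h \<alpha>) = v'" "last (h \<alpha>) = \<alpha>" using gam_path[OF T vX(2) aX] h_def by auto
    have sp: "g \<alpha> = butlast c @ h \<alpha> \<or> h \<alpha> = butlast (rev c) @ g \<alpha>"
      using split_cases[OF T Pc(1) L I aX anc] Pc g_def h_def by simp
    have xv: "xx V A E f q v \<alpha> = f \<alpha> * (\<Prod>e\<in>incident_edges E (g \<alpha>). q_path q e (g \<alpha>))"
      unfolding g_def X_def by (rule xx_eq)
    have xv': "xx V A E f q v' \<alpha> = f \<alpha> * (\<Prod>e\<in>incident_edges E (h \<alpha>). q_path q e (h \<alpha>))"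
      unfolding h_def X_def by (rule xx_eq)
    have xh: "xx_hat V A E f q v \<alpha> = f \<alpha> * (\<Prod>e\<in>{e\<in>incident_edges E (g \<alpha>). v \<notin> e}. q_path q e (g \<alpha>))"
      unfolding g_def X_def by (rule xx_hat_eq)
    show ?thesis
    proof (cases "e1 \<in> path_edges (g \<alpha>)")
      case True
      have ga: "g \<alpha> = butlast c @ h \<alpha>"
      proof (rule ccontr)
        assume "g \<alpha> \<noteq> butlast c @ h \<alpha>"
        then have hh: "h \<alpha> = butlast (rev c) @ g \<alpha>" using sp by simp
        have "pel (h \<alpha>) = pel (rev c) @ pel (g \<alpha>)"
          using pel_join[of "rev c" "g \<alpha>"] hh cne path_ne[OF Pg(1)] Pg(2) Pc(2) by (simp add: last_rev)
        moreover have "e1 \<in> set (pel (rev c))" using e1c by (simp add: pel_rev)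
        ultimately show False using path_dpel[OF Ph(1)] True unfolding path_edges_def by auto
      qed
      note ca = case_a[OF T Pc(1) L I Pg(1) Ph(1) _ ga, where q=q]
      have "xx V A E f q v \<alpha> = f \<alpha> * (QQ E q e1 v * (\<Prod>e\<in>incident_edges E (h \<alpha>) - {en}. q_path q e (h \<alpha>)))"
        using xv ca(1) Ph Pc he1 len by simp
      moreover have "xx V A E f q v' \<alpha> = f \<alpha> * (q en v' * (\<Prod>e\<in>incident_edges E (h \<alpha>) - {en}. q_path q e (h \<alpha>)))"
        using xv' ca(2) Ph Pc he1 len by simp
      moreover have "xx_hat V A E f q v \<alpha> = f \<alpha> * (\<Prod>e\<in>incident_edges E (h \<alpha>) - {en}. q_path q e (h \<alpha>))"
        using xh ca(3) Ph Pc he1 len by simp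
      ultimately show ?thesis using True unfolding det_def by (simp add: algebra_simps)
    next
      case False
      have hb: "h \<alpha> = butlast (rev c) @ g \<alpha>"
      proof (rule ccontr)
        assume "h \<alpha> \<noteq> butlast (rev c) @ g \<alpha>"
        then have gg: "g \<alpha> = butlast c @ h \<alpha>" using sp by simp
        have "pel (g \<alpha>) = pel c @ pel (h \<alpha>)"
          using pel_join[of c "h \<alpha>"] gg cne path_ne[OF Ph(1)] Ph(2) Pc(3) by simp
        then show False using e1c False unfolding path_edges_def by auto
      qed
      note ca = case_a[OF T Pr Lr Ir Ph(1) Pg(1) _ hb, where q=q]
      have "xx V A E f q v' \<alpha> = f \<alpha> * (QQ E q en v' * (\<Prod>e\<in>incident_edges E (g \<alpha>) - {e1}. q_path q e (g \<alpha>)))"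
        using xv' ca(1) Pg Pc hre lre cne by (simp add: hd_rev last_rev)
      moreover have "xx V A E f q v \<alpha> = f \<alpha> * (q e1 v * (\<Prod>e\<in>incident_edges E (g \<alpha>) - {e1}. q_path q e (g \<alpha>)))"
        using xv ca(2) Pg Pc hre lre cne by (simp add: hd_rev last_rev)
      ultimately show ?thesis using False by (simp add: algebra_simps)
    qed
  qed
  have "q e1 v * NN V A E f q v' - QQ E q en v' * NN V A E f q v =
        (\<Sum>\<alpha>\<in>S. q e1 v * xx V A E f q v' \<alpha> - QQ E q en v' * xx V A E f q v \<alpha>)"
    unfolding NN_def S_def by (simp add: sum_distrib_left sum_subtractf)
  also have "\<dots> = (\<Sum>\<alpha>\<in>S. if e1 \<in> path_edges (g \<alpha>) then det * xx_hat V A E f q v \<alpha> else 0)"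
    using key by (rule sum.cong[OF refl])
  also have "\<dots> = (\<Sum>\<alpha>\<in>{\<alpha>\<in>S. e1 \<in> path_edges (g \<alpha>)}. det * xx_hat V A E f q v \<alpha>)"
    by (rule sum.inter_filter[OF fS, symmetric])
  also have "\<dots> = det * (\<Sum>\<alpha>\<in>{\<alpha>\<in>S. e1 \<in> path_edges (g \<alpha>)}. xx_hat V A E f q v \<alpha>)"
    by (simp add: sum_distrib_left)
  also have "\<dots> = det * pp V A E f q v e1"
    unfolding pp_def S_def g_def X_def by (rule refl)
  finally have main: "q e1 v * NN V A E f q v' - QQ E q en v' * NN V A E f q v = det * pp V A E f q v e1" .
  have dp: "det_path E q c = det"
    unfolding det_path_def Let_def det_def e1_def en_def n_def[symmetric] using c0 cn by simp
  show ?thesis using main dp unfolding Let_def c_def X_def e1_def en_def n_def by simp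
qed

end
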